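(* Let $X$ be countable, $S$ a random variable on $X^m$, and $a\ge1$, $b\ge0$ integers with $a+b\le m$. Then $$I_S(a;b)\le a\cdot I_S(1;a+b-1),$$ where for integers $a',b'$ with $a'+b'\le m$, $I_S(a';b')=\mathbb E_{A,B}[I(S_A;S_B)]$ with $A$ a uniformly random $a'$-element subset of $[m]$ and $B$ a uniformly random $b'$-element subset of $[m]\setminus A$.
   Context: For $A\subseteq[m]$, $S_A=(S_j)_{j\in A}$. $I$ denotes mutual information; $I(S_A;S_\emptyset)=0$. *)

theory Defs
  imports "HOL-Probability.Probability"
begin

(* Standard formula  sum_x p x * ln (p x / q x)  (= \<infinity> if p x > 0 = q x).
   The summands are made nonnegative by adding  q x - p x, whose total sum is 0
   (both are probability distributions); this keeps the countable sum well defined. *)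
definition KL_pmf :: "'a pmf \<Rightarrow> 'a pmf \<Rightarrow> ennreal" where
  "KL_pmf p q = (\<integral>\<^sup>+ x. (if pmf q x = 0 \<and> pmf p x > 0 then \<infinity>
       else ennreal (pmf p x * ln (pmf p x / pmf q x) + pmf q x - pmf p x)) \<partial>count_space UNIV)"

definition mutual_info_pmf :: "('a \<times> 'b) pmf \<Rightarrow> ennreal" where
  "mutual_info_pmf P = KL_pmf P (pair_pmf (map_pmf fst P) (map_pmf snd P))"

definition sub_rv :: "nat set \<Rightarrow> (nat \<Rightarrow> 'x) \<Rightarrow> (nat \<Rightarrow> 'x)" where
  "sub_rv A s = restrict s A"

definition MI_sub :: "(nat \<Rightarrow> 'x) pmf \<Rightarrow> nat set \<Rightarrow> nat set \<Rightarrow> ennreal" where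
  "MI_sub S A B = mutual_info_pmf (map_pmf (\<lambda>s. (sub_rv A s, sub_rv B s)) S)"

definition I_S :: "(nat \<Rightarrow> 'x) pmf \<Rightarrow> nat \<Rightarrow> nat \<Rightarrow> nat \<Rightarrow> ennreal" where
  "I_S S m a b =
     (\<Sum>A\<in>{A. A \<subseteq> {1..m} \<and> card A = a}.
        (\<Sum>B\<in>{B. B \<subseteq> {1..m} - A \<and> card B = b}. MI_sub S A B))
     / of_nat ((m choose a) * ((m - a) choose b))"

end

theory Submission
  imports Defs
begin


definition psi :: "real \<Rightarrow> real" where "psi t = t - ln t - 1"

lemma psi_nonneg: "t > 0 \<Longrightarrow> psi t \<ge> 0"
  unfolding psi_def using ln_le_minus_one[of t] by simp

definition EE :: "'a pmf \<Rightarrow> ('a \<Rightarrow> real) \<Rightarrow> ennreal" where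
  "EE S R = (\<integral>\<^sup>+ s. ennreal (R s) \<partial>S)"

definition KK :: "'a pmf \<Rightarrow> ('a \<Rightarrow> real) \<Rightarrow> ennreal" where
  "KK S R = (\<integral>\<^sup>+ s. ennreal (psi (R s)) \<partial>S) + (1 - EE S R)"

lemma KK_map: "KK (map_pmf f S) R = KK S (R \<circ> f)"
  by (simp add: KK_def EE_def)

lemma EE_map: "EE (map_pmf f S) R = EE S (R \<circ> f)"
  by (simp add: EE_def)

lemma KK_one: "KK S (\<lambda>_. 1) = 0"
  by (simp add: KK_def EE_def psi_def measure_pmf.emeasure_space_1)

lemma EE_one: "EE S (\<lambda>_. 1) = 1"
  by (simp add: EE_def measure_pmf.emeasure_space_1)

lemma KK_identity:
  assumes pos: "\<And>s. s \<in> set_pmf S \<Longrightarrow> R1 s > 0 \<and> R2 s > 0 \<and> R3 s > 0 \<and> R4 s > 0"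
    and prod: "\<And>s. s \<in> set_pmf S \<Longrightarrow> R1 s * R2 s = R3 s * R4 s"
    and e1: "EE S R1 \<le> 1" and e2: "EE S R2 \<le> 1" and e3: "EE S R3 \<le> 1" and e4: "EE S R4 \<le> 1"
  shows "KK S R1 + KK S R2 = KK S R3 + KK S R4"
proof -
  define I1 where "I1 = (\<integral>\<^sup>+ s. ennreal (psi (R1 s)) \<partial>S)"
  define I2 where "I2 = (\<integral>\<^sup>+ s. ennreal (psi (R2 s)) \<partial>S)"
  define I3 where "I3 = (\<integral>\<^sup>+ s. ennreal (psi (R3 s)) \<partial>S)"
  define I4 where "I4 = (\<integral>\<^sup>+ s. ennreal (psi (R4 s)) \<partial>S)"
  have pw: "ennreal (psi (R1 s)) + ennreal (psi (R2 s)) + (ennreal (R3 s) + ennreal (R4 s))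
      = ennreal (psi (R3 s)) + ennreal (psi (R4 s)) + (ennreal (R1 s) + ennreal (R2 s))"
    if s: "s \<in> set_pmf S" for s
  proof -
    from pos[OF s] have p: "R1 s > 0" "R2 s > 0" "R3 s > 0" "R4 s > 0" by auto
    have "ln (R1 s) + ln (R2 s) = ln (R1 s * R2 s)" using p by (simp add: ln_mult)
    also have "\<dots> = ln (R3 s * R4 s)" using prod[OF s] by simp
    also have "\<dots> = ln (R3 s) + ln (R4 s)" using p by (simp add: ln_mult)
    finally have "ln (R1 s) + ln (R2 s) = ln (R3 s) + ln (R4 s)" .
    hence r: "psi (R1 s) + psi (R2 s) + (R3 s + R4 s) = psi (R3 s) + psi (R4 s) + (R1 s + R2 s)"
      unfolding psi_def by simp
    have n: "psi (R1 s) \<ge> 0" "psi (R2 s) \<ge> 0" "psi (R3 s) \<ge> 0" "psi (R4 s) \<ge> 0"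
      using p psi_nonneg by auto
    have "ennreal (psi (R1 s) + psi (R2 s) + (R3 s + R4 s)) = ennreal (psi (R3 s) + psi (R4 s) + (R1 s + R2 s))"
      using r by simp
    thus ?thesis using n p by (simp add: ennreal_plus)
  qed
  have "(\<integral>\<^sup>+ s. ennreal (psi (R1 s)) + ennreal (psi (R2 s)) + (ennreal (R3 s) + ennreal (R4 s)) \<partial>S)
      = (\<integral>\<^sup>+ s. ennreal (psi (R3 s)) + ennreal (psi (R4 s)) + (ennreal (R1 s) + ennreal (R2 s)) \<partial>S)"
    by (rule nn_integral_cong_AE) (simp add: AE_measure_pmf_iff pw)
  hence H: "I1 + I2 + (EE S R3 + EE S R4) = I3 + I4 + (EE S R1 + EE S R2)"
    by (simp add: nn_integral_add I1_def I2_def I3_def I4_def EE_def)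
  have fin: "EE S R1 + EE S R2 + EE S R3 + EE S R4 \<noteq> \<infinity>"
    using e1 e2 e3 e4 by (auto simp: top_unique ennreal_add_eq_top)
  have c: "\<And>E. E \<le> (1::ennreal) \<Longrightarrow> (1 - E) + E = 1" by (simp add: diff_add_cancel_ennreal)
  have "(KK S R1 + KK S R2) + (EE S R1 + EE S R2 + EE S R3 + EE S R4)
      = (I1 + I2 + (EE S R3 + EE S R4)) + ((1 - EE S R1) + EE S R1) + ((1 - EE S R2) + EE S R2)"
    by (simp add: KK_def I1_def I2_def ac_simps)
  also have "\<dots> = I3 + I4 + (EE S R1 + EE S R2) + 1 + 1" using H c e1 e2 by simp
  also have "\<dots> = (I3 + I4 + (EE S R1 + EE S R2)) + ((1 - EE S R3) + EE S R3) + ((1 - EE S R4) + EE S R4)"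
    using c e3 e4 by simp
  also have "\<dots> = (KK S R3 + KK S R4) + (EE S R1 + EE S R2 + EE S R3 + EE S R4)"
    by (simp add: KK_def I3_def I4_def ac_simps)
  finally show ?thesis using fin ennreal_add_left_cancel by (metis add.commute)
qed



lemma EE_ratio:
  "EE p (\<lambda>x. pmf q x / pmf p x) = emeasure (measure_pmf q) (set_pmf p)"
proof -
  have "EE p (\<lambda>x. pmf q x / pmf p x) = (\<integral>\<^sup>+ x. ennreal (pmf p x) * ennreal (pmf q x / pmf p x) \<partial>count_space UNIV)"
    by (simp add: EE_def nn_integral_measure_pmf)
  also have "\<dots> = (\<integral>\<^sup>+ x. ennreal (pmf q x) * indicator (set_pmf p) x \<partial>count_space UNIV)"
    by (rule nn_integral_cong) (auto simp: ennreal_mult[symmetric] set_pmf_iff indicator_def)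
  also have "\<dots> = (\<integral>\<^sup>+ x. ennreal (pmf q x) \<partial>count_space (set_pmf p))"
    by (simp add: nn_integral_count_space_indicator)
  also have "\<dots> = emeasure (measure_pmf q) (set_pmf p)" by (rule nn_integral_pmf)
  finally show ?thesis .
qed

lemma EE_ratio_le: "EE p (\<lambda>x. pmf q x / pmf p x) \<le> 1"
  unfolding EE_ratio by (rule measure_pmf.emeasure_le_1)

lemma KL_as_KK:
  assumes supp: "\<And>x. pmf p x > 0 \<Longrightarrow> pmf q x > 0"
  shows "KL_pmf p q = KK p (\<lambda>x. pmf q x / pmf p x)"
proof -
  have pw: "(if pmf q x = 0 \<and> pmf p x > 0 then \<infinity>
       else ennreal (pmf p x * ln (pmf p x / pmf q x) + pmf q x - pmf p x))
     = ennreal (pmf p x) * ennreal (psi (pmf q x / pmf p x)) + ennreal (pmf q x) * indicator (- set_pmf p) x" for x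
  proof (cases "pmf p x > 0")
    case True
    then have q: "pmf q x > 0" using supp by auto
    have "pmf p x * ln (pmf p x / pmf q x) + pmf q x - pmf p x = pmf p x * psi (pmf q x / pmf p x)"
      using True q by (simp add: psi_def ln_div field_simps)
    moreover have "psi (pmf q x / pmf p x) \<ge> 0" using True q by (intro psi_nonneg) simp
    ultimately show ?thesis using True q by (simp add: ennreal_mult[symmetric] set_pmf_iff)
  next
    case False
    then have "pmf p x = 0" using pmf_nonneg[of p x] by linarith
    then show ?thesis by (simp add: set_pmf_iff)
  qed
  have "KL_pmf p q = (\<integral>\<^sup>+ x. ennreal (pmf p x) * ennreal (psi (pmf q x / pmf p x)) \<partial>count_space UNIV)
        + (\<integral>\<^sup>+ x. ennreal (pmf q x) * indicator (- set_pmf p) x \<partial>count_space UNIV)"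
    unfolding KL_pmf_def pw by (simp add: nn_integral_add)
  also have "(\<integral>\<^sup>+ x. ennreal (pmf q x) * indicator (- set_pmf p) x \<partial>count_space UNIV)
      = emeasure (measure_pmf q) (- set_pmf p)"
    by (simp add: nn_integral_count_space_indicator[symmetric] nn_integral_pmf)
  also have "\<dots> = 1 - emeasure (measure_pmf q) (set_pmf p)"
    using emeasure_compl[of "set_pmf p" "measure_pmf q"]
    by (simp add: Compl_eq_Diff_UNIV emeasure_pmf measure_pmf.emeasure_space_1)
  finally show ?thesis
    by (simp add: KK_def EE_ratio nn_integral_measure_pmf)
qed

lemma KL_as_KK_set:
  assumes supp: "\<And>x. x \<in> set_pmf p \<Longrightarrow> x \<in> set_pmf q"
  shows "KL_pmf p q = KK p (\<lambda>x. pmf q x / pmf p x)"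
  using supp by (intro KL_as_KK) (simp add: pmf_positive_iff)

lemma KL_dpi:
  assumes supp: "\<And>x. x \<in> set_pmf P \<Longrightarrow> x \<in> set_pmf Q"
  shows "KL_pmf (map_pmf f P) (map_pmf f Q) \<le> KL_pmf P Q"
proof -
  define P' where "P' = map_pmf f P"
  define Q' where "Q' = map_pmf f Q"
  define R where "R = (\<lambda>x. pmf Q x / pmf P x)"
  define R' where "R' = (\<lambda>y. pmf Q' y / pmf P' y)"
  define R4 where "R4 = (\<lambda>x. R x / R' (f x))"
  have supp': "y \<in> set_pmf Q'" if "y \<in> set_pmf P'" for y
    using that supp by (auto simp: P'_def Q'_def)
  have K1: "KL_pmf P Q = KK P R" unfolding R_def by (rule KL_as_KK_set[OF supp])
  have K2: "KL_pmf P' Q' = KK P (R' \<circ> f)"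
  proof -
    have "KL_pmf P' Q' = KK P' R'" unfolding R'_def by (rule KL_as_KK_set[OF supp'])
    also have "KK P' R' = KK P (R' \<circ> f)" unfolding P'_def by (rule KK_map)
    finally show ?thesis .
  qed
  have posx: "R x > 0 \<and> R' (f x) > 0" if x: "x \<in> set_pmf P" for x
  proof -
    have "f x \<in> set_pmf P'" "f x \<in> set_pmf Q'" using x supp by (auto simp: P'_def Q'_def)
    then show ?thesis using x supp[OF x]
      by (auto simp: R_def R'_def pmf_positive)
  qed
  have e4: "EE P R4 \<le> 1"
  proof -
    have "EE P R4 = (\<integral>\<^sup>+ x. ennreal (pmf P x) * ennreal (R4 x) \<partial>count_space UNIV)"
      by (simp add: EE_def nn_integral_measure_pmf)
    also have "\<dots> \<le> (\<integral>\<^sup>+ x. ennreal (pmf Q x) * ennreal (pmf P' (f x) / pmf Q' (f x)) \<partial>count_space UNIV)"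
    proof (rule nn_integral_mono)
      fix x
      show "ennreal (pmf P x) * ennreal (R4 x) \<le> ennreal (pmf Q x) * ennreal (pmf P' (f x) / pmf Q' (f x))"
      proof (cases "x \<in> set_pmf P")
        case True
        then have "pmf P x > 0" by (simp add: pmf_positive)
        then have "pmf P x * R4 x = pmf Q x * (pmf P' (f x) / pmf Q' (f x))"
          by (simp add: R4_def R_def R'_def field_simps)
        moreover have "R4 x \<ge> 0" by (simp add: R4_def R_def R'_def)
        moreover have "pmf P' (f x) / pmf Q' (f x) \<ge> 0" by simp
        ultimately show ?thesis by (simp add: ennreal_mult'[symmetric])
      next
        case False
        then show ?thesis by (simp add: set_pmf_iff)
      qed
    qed
    also have "\<dots> = (\<integral>\<^sup>+ x. ennreal (pmf P' (f x) / pmf Q' (f x)) \<partial>Q)"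
      by (simp add: nn_integral_measure_pmf)
    also have "\<dots> = (\<integral>\<^sup>+ y. ennreal (pmf P' y / pmf Q' y) \<partial>Q')"
      by (simp add: Q'_def)
    also have "\<dots> = (\<integral>\<^sup>+ y. ennreal (pmf Q' y) * ennreal (pmf P' y / pmf Q' y) \<partial>count_space UNIV)"
      by (simp add: nn_integral_measure_pmf)
    also have "\<dots> \<le> (\<integral>\<^sup>+ y. ennreal (pmf P' y) \<partial>count_space UNIV)"
    proof (rule nn_integral_mono)
      fix y
      show "ennreal (pmf Q' y) * ennreal (pmf P' y / pmf Q' y) \<le> ennreal (pmf P' y)"
      proof (cases "pmf Q' y = 0")
        case True then show ?thesis by simp
      next
        case False
        then have "pmf Q' y * (pmf P' y / pmf Q' y) = pmf P' y" by simp
        then show ?thesis by (simp add: ennreal_mult[symmetric])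
      qed
    qed
    also have "\<dots> = 1" by (simp add: nn_integral_pmf emeasure_pmf)
    finally show ?thesis .
  qed
  have e1: "EE P R \<le> 1" unfolding R_def by (rule EE_ratio_le)
  have e3: "EE P (R' \<circ> f) \<le> 1"
    unfolding R'_def EE_map[symmetric] P'_def[symmetric] by (rule EE_ratio_le)
  have "KK P R + KK P (\<lambda>_. 1) = KK P (R' \<circ> f) + KK P R4"
    by (rule KK_identity) (use posx e1 e3 e4 in \<open>auto simp: EE_one R4_def dest!: posx\<close>)
  then have "KK P R = KK P (R' \<circ> f) + KK P R4" by (simp add: KK_one)
  then have "KK P (R' \<circ> f) \<le> KK P R" by simp
  then show ?thesis using K1 K2 by (simp add: P'_def Q'_def)
qed

lemma MI_dpi:
  "mutual_info_pmf (map_pmf (\<lambda>(u,v). (h1 u, h2 v)) P) \<le> mutual_info_pmf P"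
proof -
  have eq: "map_pmf (\<lambda>(u,v). (h1 u, h2 v)) (pair_pmf (map_pmf fst P) (map_pmf snd P))
     = pair_pmf (map_pmf fst (map_pmf (\<lambda>(u,v). (h1 u, h2 v)) P)) (map_pmf snd (map_pmf (\<lambda>(u,v). (h1 u, h2 v)) P))"
    by (simp add: map_pair map_pmf_comp split_beta)
  have "KL_pmf (map_pmf (\<lambda>(u,v). (h1 u, h2 v)) P) (map_pmf (\<lambda>(u,v). (h1 u, h2 v)) (pair_pmf (map_pmf fst P) (map_pmf snd P)))
      \<le> KL_pmf P (pair_pmf (map_pmf fst P) (map_pmf snd P))"
    by (rule KL_dpi) (force simp: set_pair_pmf)
  then show ?thesis unfolding mutual_info_pmf_def eq .
qed



definition mu :: "(nat \<Rightarrow> 'x) pmf \<Rightarrow> nat set \<Rightarrow> (nat \<Rightarrow> 'x) \<Rightarrow> real" where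
  "mu S D s = pmf (map_pmf (sub_rv D) S) (sub_rv D s)"

definition RR :: "(nat \<Rightarrow> 'x) pmf \<Rightarrow> nat set \<Rightarrow> nat set \<Rightarrow> (nat \<Rightarrow> 'x) \<Rightarrow> real" where
  "RR S A B s = mu S A s * mu S B s / mu S (A \<union> B) s"

lemma mu_pos: "s \<in> set_pmf S \<Longrightarrow> mu S D s > 0"
  unfolding mu_def by (rule pmf_positive) simp

lemma KK_cong: "(\<And>s. s \<in> set_pmf S \<Longrightarrow> R s = R' s) \<Longrightarrow> KK S R = KK S R'"
proof -
  assume h: "\<And>s. s \<in> set_pmf S \<Longrightarrow> R s = R' s"
  have "(\<integral>\<^sup>+ s. ennreal (psi (R s)) \<partial>S) = (\<integral>\<^sup>+ s. ennreal (psi (R' s)) \<partial>S)"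
    by (rule nn_integral_cong_AE) (simp add: AE_measure_pmf_iff h)
  moreover have "EE S R = EE S R'" unfolding EE_def
    by (rule nn_integral_cong_AE) (simp add: AE_measure_pmf_iff h)
  ultimately show ?thesis by (simp add: KK_def)
qed

lemma restrict_pair_eq:
  "(restrict t A = restrict s A \<and> restrict t B = restrict s B) \<longleftrightarrow> restrict t (A \<union> B) = restrict s (A \<union> B)"
  by (auto simp: fun_eq_iff restrict_def)

lemma MI_KK:
  fixes S :: "(nat \<Rightarrow> 'x) pmf"
  shows "MI_sub S A B = KK S (RR S A B) \<and> EE S (RR S A B) \<le> 1"
proof -
  define \<pi> where "\<pi> = (\<lambda>s::nat \<Rightarrow> 'x. (sub_rv A s, sub_rv B s))"
  define P where "P = map_pmf \<pi> S"
  define Q where "Q = pair_pmf (map_pmf fst P) (map_pmf snd P)"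
  define R where "R = (\<lambda>x. pmf Q x / pmf P x)"
  have fstP: "map_pmf fst P = map_pmf (sub_rv A) S" and sndP: "map_pmf snd P = map_pmf (sub_rv B) S"
    by (simp_all add: P_def \<pi>_def map_pmf_comp)
  have K: "KL_pmf P Q = KK P R" unfolding R_def Q_def
    by (rule KL_as_KK_set) (force simp: set_pair_pmf)
  have Rpi: "R (\<pi> s) = RR S A B s" for s
  proof -
    have "pmf Q (\<pi> s) = mu S A s * mu S B s"
      by (simp add: Q_def fstP sndP \<pi>_def pmf_pair mu_def)
    moreover have "pmf P (\<pi> s) = mu S (A \<union> B) s"
    proof -
      have "\<pi> -` {\<pi> s} = sub_rv (A \<union> B) -` {sub_rv (A \<union> B) s}"
        unfolding set_eq_iff by (simp add: \<pi>_def sub_rv_def restrict_pair_eq)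
      then show ?thesis by (simp add: P_def mu_def pmf_map)
    qed
    ultimately show ?thesis by (simp add: R_def RR_def)
  qed
  have "R \<circ> \<pi> = RR S A B" by (simp add: fun_eq_iff Rpi)
  moreover have "MI_sub S A B = KK P R"
    using K by (simp add: MI_sub_def mutual_info_pmf_def P_def Q_def \<pi>_def)
  moreover have "EE P R \<le> 1" unfolding R_def by (rule EE_ratio_le)
  ultimately show ?thesis by (simp add: P_def KK_map EE_map)
qed

lemma MI_KK_eq: "MI_sub S A B = KK S (RR S A B)" using MI_KK by blast
lemma EE_RR_le: "EE S (RR S A B) \<le> 1" using MI_KK by blast

lemma MI_L:
  assumes "j \<in> A" "j \<notin> B"
  shows "MI_sub S A B \<le> MI_sub S (A - {j}) B + MI_sub S {j} (A \<union> B - {j})"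
proof -
  have s1: "(A - {j}) \<union> {j} = A" using assms by auto
  have s2: "(A - {j}) \<union> B = A \<union> B - {j}" using assms by auto
  have s3: "{j} \<union> (A \<union> B - {j}) = A \<union> B" using assms by auto
  have "KK S (RR S A B) + KK S (RR S (A - {j}) {j}) = KK S (RR S (A - {j}) B) + KK S (RR S {j} (A \<union> B - {j}))"
  proof (rule KK_identity)
    fix s assume s: "s \<in> set_pmf S"
    note p = mu_pos[OF s]
    show "0 < RR S A B s \<and> 0 < RR S (A - {j}) {j} s \<and> 0 < RR S (A - {j}) B s \<and> 0 < RR S {j} (A \<union> B - {j}) s"
      by (simp add: RR_def p)
    show "RR S A B s * RR S (A - {j}) {j} s = RR S (A - {j}) B s * RR S {j} (A \<union> B - {j}) s"
      unfolding RR_def s1 s2 s3 using p[of A] p[of "A \<union> B"] p[of "A \<union> B - {j}"]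
      by (simp add: field_simps)
  qed (rule EE_RR_le)+
  then have "MI_sub S A B + MI_sub S (A - {j}) {j} = MI_sub S (A - {j}) B + MI_sub S {j} (A \<union> B - {j})"
    unfolding MI_KK_eq .
  moreover have "MI_sub S A B \<le> MI_sub S A B + MI_sub S (A - {j}) {j}" by simp
  ultimately show ?thesis by simp
qed

lemma MI_M:
  assumes "C \<subseteq> C'"
  shows "MI_sub S D C \<le> MI_sub S D C'"
proof -
  have e: "(\<lambda>x. (sub_rv D x, restrict (sub_rv C' x) C)) = (\<lambda>s. (sub_rv D s, sub_rv C s))"
    using assms by (auto simp: fun_eq_iff sub_rv_def restrict_def)
  have "map_pmf (\<lambda>(u,v). (id u, restrict v C)) (map_pmf (\<lambda>s. (sub_rv D s, sub_rv C' s)) S)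
     = map_pmf (\<lambda>s. (sub_rv D s, sub_rv C s)) S" by (simp add: map_pmf_comp e)
  then show ?thesis unfolding MI_sub_def
    using MI_dpi[of id "\<lambda>v. restrict v C" "map_pmf (\<lambda>s. (sub_rv D s, sub_rv C' s)) S"] by simp
qed

lemma MI_empty: "MI_sub S {} B = 0"
proof -
  have "MI_sub S {} B = KK S (RR S {} B)" by (rule MI_KK_eq)
  also have "\<dots> = KK S (\<lambda>_. 1)"
  proof (rule KK_cong)
    fix s assume s: "s \<in> set_pmf S"
    have c: "sub_rv {} = (\<lambda>_. (\<lambda>_. undefined))" by (simp add: fun_eq_iff sub_rv_def)
    have "mu S {} s = 1" by (simp add: mu_def c)
    then show "RR S {} B s = 1" using mu_pos[OF s, of B] by (simp add: RR_def)
  qed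
  finally show ?thesis by (simp add: KK_one)
qed

lemma MI_chain:
  assumes "finite A" "A \<inter> B = {}"
  shows "MI_sub S A B \<le> (\<Sum>j\<in>A. MI_sub S {j} (A \<union> B - {j}))"
  using assms
proof (induction A rule: finite_induct)
  case empty
  then show ?case by (simp add: MI_empty)
next
  case (insert j A)
  have "MI_sub S (insert j A) B \<le> MI_sub S A B + MI_sub S {j} (insert j A \<union> B - {j})"
    using MI_L[of j "insert j A" B S] insert by (simp add: insert_Diff_if)
  also have "MI_sub S A B \<le> (\<Sum>k\<in>A. MI_sub S {k} (A \<union> B - {k}))"
    using insert by auto
  also have "\<dots> \<le> (\<Sum>k\<in>A. MI_sub S {k} (insert j A \<union> B - {k}))"
    by (intro sum_mono MI_M) auto
  finally show ?case using insert by (simp add: add.commute)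
qed



lemma fin_sets: "finite {A. A \<subseteq> (X::nat set) \<and> P A}" if "finite X"
  using that by (rule finite_subset[rotated, OF finite_Collect_subsets]) auto

lemma sum_Sigma2:
  assumes "finite I" "\<And>A. A \<in> I \<Longrightarrow> finite (J A)" "\<And>A B. A \<in> I \<Longrightarrow> B \<in> J A \<Longrightarrow> finite (K A B)"
  shows "(\<Sum>A\<in>I. \<Sum>B\<in>J A. \<Sum>j\<in>K A B. f A B j) = (\<Sum>t\<in>Sigma (Sigma I J) (\<lambda>p. K (fst p) (snd p)). f (fst (fst t)) (snd (fst t)) (snd t))"
proof -
  have "(\<Sum>A\<in>I. \<Sum>B\<in>J A. \<Sum>j\<in>K A B. f A B j) = (\<Sum>p\<in>Sigma I J. \<Sum>j\<in>K (fst p) (snd p). f (fst p) (snd p) j)"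
    using assms by (subst sum.Sigma) (auto simp: split_def)
  also have "\<dots> = (\<Sum>t\<in>Sigma (Sigma I J) (\<lambda>p. K (fst p) (snd p)). f (fst (fst t)) (snd (fst t)) (snd t))"
    using assms by (subst sum.Sigma) (auto simp: split_def intro!: finite_SigmaI)
  finally show ?thesis .
qed

lemma double_count:
  fixes g :: "nat set \<Rightarrow> nat set \<Rightarrow> ennreal" and m a b :: nat
  assumes a: "1 \<le> a"
  shows "(\<Sum>A\<in>{A. A \<subseteq> {1..m} \<and> card A = a}. \<Sum>B\<in>{B. B \<subseteq> {1..m} - A \<and> card B = b}. \<Sum>j\<in>A. g {j} (A \<union> B - {j}))
    = of_nat ((a + b - 1) choose (a - 1)) *
      (\<Sum>J\<in>{A. A \<subseteq> {1..m} \<and> card A = 1}. \<Sum>C\<in>{B. B \<subseteq> {1..m} - J \<and> card B = a + b - 1}. g J C)"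
    (is "?L = ?R")
proof -
  define T1 where "T1 = Sigma (Sigma {A. A \<subseteq> {1..m} \<and> card A = a} (\<lambda>A. {B. B \<subseteq> {1..m} - A \<and> card B = b})) (\<lambda>p. fst p)"
  define T2 where "T2 = Sigma (Sigma {A. A \<subseteq> {1..m} \<and> card A = 1} (\<lambda>J. {B. B \<subseteq> {1..m} - J \<and> card B = a + b - 1})) (\<lambda>p. {D. D \<subseteq> snd p \<and> card D = a - 1})"
  have L: "?L = (\<Sum>((A,B),j)\<in>T1. g {j} (A \<union> B - {j}))"
    unfolding T1_def
    by (subst sum_Sigma2[where K="\<lambda>A B. A"]) (auto simp: fin_sets split_def intro: finite_subset)
  have "?R = (\<Sum>J\<in>{A. A \<subseteq> {1..m} \<and> card A = 1}. \<Sum>C\<in>{B. B \<subseteq> {1..m} - J \<and> card B = a + b - 1}. \<Sum>D\<in>{D. D \<subseteq> C \<and> card D = a - 1}. g J C)"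
  proof -
    have cardD: "card {D. D \<subseteq> C \<and> card D = a - 1} = (a + b - 1) choose (a - 1)"
      if "finite C" "card C = a + b - 1" for C
      using that n_subsets[of C "a - 1"] by simp
    show ?thesis unfolding sum_distrib_left
      by (intro sum.cong refl) (simp only: sum_constant, subst cardD, auto, meson finite_Diff finite_atLeastAtMost finite_subset)
  qed
  also have "\<dots> = (\<Sum>((J,C),D)\<in>T2. g J C)"
  proof -
    have fin: "finite {D. D \<subseteq> C \<and> P D}" if "C \<subseteq> {1..m} - J" for C J P
      using that by (intro fin_sets) (meson finite_Diff finite_atLeastAtMost finite_subset)
    show ?thesis unfolding T2_def
      by (subst sum_Sigma2[where K="\<lambda>J C. {D. D \<subseteq> C \<and> card D = a - 1}"]) (auto simp: fin_sets split_def fin)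
  qed
  finally have R: "?R = (\<Sum>((J,C),D)\<in>T2. g J C)" .
  have "(\<Sum>((J,C),D)\<in>T2. g J C) = (\<Sum>((A,B),j)\<in>T1. g {j} (A \<union> B - {j}))"
  proof (rule sum.reindex_bij_witness[where j = "\<lambda>((J,C),D). ((insert (the_elem J) D, C - D), the_elem J)"
        and i = "\<lambda>((A,B),x). (({x}, A \<union> B - {x}), A - {x})"])
    fix t assume t: "t \<in> T2"
    then obtain J C D where tt: "t = ((J,C),D)" and J: "J \<subseteq> {1..m}" "card J = 1"
      and C: "C \<subseteq> {1..m} - J" "card C = a + b - 1" and D: "D \<subseteq> C" "card D = a - 1"
      unfolding T2_def by auto
    obtain x where x: "J = {x}" using J card_1_singletonE by blast
    have fC: "finite C" using C finite_subset by blast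
    have fD: "finite D" using D fC finite_subset by blast
    have xD: "x \<notin> D" using x C D by auto
    have xm: "1 \<le> x" "x \<le> m" using x J by auto
    have e1: "insert x D \<union> (C - D) - {x} = C" using x C D by auto
    show "(\<lambda>((A,B),x). (({x}, A \<union> B - {x}), A - {x})) ((\<lambda>((J,C),D). ((insert (the_elem J) D, C - D), the_elem J)) t) = t"
      using tt x e1 xD by auto
    show "(\<lambda>((J,C),D). ((insert (the_elem J) D, C - D), the_elem J)) t \<in> T1"
      using tt x C D xD fD fC a xm unfolding T1_def by (auto simp: card_Diff_subset)
    show "(\<lambda>((A, B), j). g {j} (A \<union> B - {j})) ((\<lambda>((J,C),D). ((insert (the_elem J) D, C - D), the_elem J)) t)
       = (\<lambda>((J, C), D). g J C) t"
      using tt x e1 by auto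
  next
    fix t assume t: "t \<in> T1"
    then obtain A B x where tt: "t = ((A,B),x)" and A: "A \<subseteq> {1..m}" "card A = a"
      and B: "B \<subseteq> {1..m} - A" "card B = b" and x: "x \<in> A"
      unfolding T1_def by auto
    have fA: "finite A" using A finite_subset by blast
    have fB: "finite B" using B finite_subset by blast
    have e: "insert x (A - {x}) = A" "(A \<union> B - {x}) - (A - {x}) = B" using x B by auto
    show "(\<lambda>((J,C),D). ((insert (the_elem J) D, C - D), the_elem J)) ((\<lambda>((A,B),x). (({x}, A \<union> B - {x}), A - {x})) t) = t"
      using tt e by auto
    have cAB: "card (A \<union> B - {x}) = a + b - 1"
    proof -
      have "A \<inter> B = {}" using B by auto
      then have "card (A \<union> B) = a + b" using fA fB A B by (simp add: card_Un_disjoint)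
      then show ?thesis using x by simp
    qed
    show "(\<lambda>((A,B),x). (({x}, A \<union> B - {x}), A - {x})) t \<in> T2"
      using tt A B x cAB fA unfolding T2_def by auto
  qed
  then show ?thesis using L R by simp
qed



lemma binom_id:
  fixes m a b :: nat
  assumes "1 \<le> a" "a + b \<le> m"
  shows "((a + b - 1) choose (a - 1)) * ((m choose 1) * ((m - 1) choose (a + b - 1)))
       = a * ((m choose a) * ((m - a) choose b))"
proof -
  obtain a' where a': "a = Suc a'" using assms(1) by (cases a) auto
  obtain m' where m': "m = Suc m'" using assms by (cases m) auto
  have h1: "(m choose (a + b)) * ((a + b) choose a) = (m choose a) * ((m - a) choose b)"
    using choose_mult[of a "a + b" m] assms by simp
  have h2: "a * ((a + b) choose a) = (a + b) * ((a + b - 1) choose (a - 1))"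
    using Suc_times_binomial[of a' "a' + b"] a' by simp
  have h3: "m * ((m - 1) choose (a + b - 1)) = (a + b) * (m choose (a + b))"
    using Suc_times_binomial[of "a' + b" m'] a' m' by simp
  have "a * ((m choose a) * ((m - a) choose b)) = (m choose (a + b)) * (a * ((a + b) choose a))"
    using h1 by (metis mult.left_commute)
  also have "\<dots> = (m choose (a + b)) * ((a + b) * ((a + b - 1) choose (a - 1)))" using h2 by simp
  also have "\<dots> = ((a + b - 1) choose (a - 1)) * ((a + b) * (m choose (a + b)))" by (simp add: ac_simps)
  also have "\<dots> = ((a + b - 1) choose (a - 1)) * (m * ((m - 1) choose (a + b - 1)))" using h3 by simp
  finally show ?thesis by simp
qed

theorem mainTheorem10:
  fixes S :: "(nat \<Rightarrow> 'x::countable) pmf" and m a b :: nat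
  assumes "1 \<le> a" and "a + b \<le> m"
  shows "I_S S m a b \<le> of_nat a * I_S S m 1 (a + b - 1)"
proof -
  define k where "k = (a + b - 1) choose (a - 1)"
  define N1 where "N1 = (m choose a) * ((m - a) choose b)"
  define N2 where "N2 = (m choose 1) * ((m - 1) choose (a + b - 1))"
  define X1 where "X1 = (\<Sum>A\<in>{A. A \<subseteq> {1..m} \<and> card A = a}. \<Sum>B\<in>{B. B \<subseteq> {1..m} - A \<and> card B = b}. MI_sub S A B)"
  define X2 where "X2 = (\<Sum>J\<in>{A. A \<subseteq> {1..m} \<and> card A = 1}. \<Sum>C\<in>{B. B \<subseteq> {1..m} - J \<and> card B = a + b - 1}. MI_sub S J C)"
  have I1: "I_S S m a b = X1 / of_nat N1" by (simp add: I_S_def X1_def N1_def)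
  have I2: "I_S S m 1 (a + b - 1) = X2 / of_nat N2" by (simp add: I_S_def X2_def N2_def)
  have "X1 \<le> (\<Sum>A\<in>{A. A \<subseteq> {1..m} \<and> card A = a}. \<Sum>B\<in>{B. B \<subseteq> {1..m} - A \<and> card B = b}.
              \<Sum>j\<in>A. MI_sub S {j} (A \<union> B - {j}))"
    unfolding X1_def
    by (intro sum_mono MI_chain) (auto intro: rev_finite_subset[OF finite_atLeastAtMost])
  also have "\<dots> = of_nat k * X2"
    unfolding k_def X2_def by (rule double_count[OF assms(1)])
  finally have X: "X1 \<le> of_nat k * X2" .
  have N1pos: "N1 > 0" using assms by (simp add: N1_def)
  have N2pos: "N2 > 0" using assms by (simp add: N2_def)
  have kN: "k * N2 = a * N1" unfolding k_def N1_def N2_def by (rule binom_id[OF assms])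
  have r: "real k / real N1 = real a / real N2"
  proof -
    have "real k * real N2 = real a * real N1" using kN by (metis of_nat_mult)
    then show ?thesis using N1pos N2pos by (simp add: field_simps)
  qed
  have "I_S S m a b \<le> (of_nat k * X2) / of_nat N1" unfolding I1 by (rule divide_right_mono_ennreal[OF X])
  also have "\<dots> = X2 * (of_nat k / of_nat N1)" by (simp add: ennreal_times_divide ac_simps)
  also have "of_nat k / of_nat N1 = (ennreal (real k / real N1))"
    using N1pos by (simp add: ennreal_of_nat_eq_real_of_nat divide_ennreal)
  also have "\<dots> = of_nat a / of_nat N2"
    using N2pos by (simp add: r ennreal_of_nat_eq_real_of_nat divide_ennreal)
  also have "X2 * (of_nat a / of_nat N2) = of_nat a * I_S S m 1 (a + b - 1)"
    unfolding I2 by (simp add: ennreal_times_divide ac_simps)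
  finally show ?thesis .
qed

end
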